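(* Let $k\ge 0$ be an integer and let $T$ be the tree on $3k+4$ vertices obtained by taking $k+1$ disjoint copies of the star $K_{1,3}$ and identifying one leaf from each copy into a single vertex. Then $Z(T)=k+2$ and $Z_k(T)=k+1$.
   Context: Filling rule: if a filled vertex has exactly one unfilled neighbor (and any number of filled neighbors), that neighbor becomes filled; "applying the filling rule in a subgraph $H$" means applying it with neighborhoods taken in $H$. The $Z_q$-Game on $G$ ($q\ge 0$ an integer): initially all vertices are unfilled; a player repeatedly performs one of the following operations until all vertices are filled: (1) for one token, change any vertex from unfilled to filled; (2) at no cost, apply the filling rule in $G$; (3) if $F$ is the current set of filled vertices and $U_1,\dots,U_k$ are the vertex sets of the connected components of $G[V(G)\setminus F]$ with $k\ge q+1$, the player announces a selection of at least $q+1$ of the $U_i$ to an oracle (an adversary), the oracle returns a nonempty subset $\{U_{i_1},\dots,U_{i_\ell}\}$ of the selected components, and the player may at no cost apply the filling rule in $G[F\cup U_{i_1}\cup\cdots\cup U_{i_\ell}]$. $Z_q(G)$ is the minimum number of tokens with which the player can guarantee that all vertices become filled, regardless of the oracle's responses. The $Z$-Game is the same game with only operations (1) and (2) allowed, and $Z(G)$ (the zero forcing number) is the minimum number of tokens needed there to fill all vertices. *)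

theory Defs
  imports Main
begin

text \<open>A graph is given by a vertex set V and an adjacency relation E
(assumed symmetric and irreflexive where relevant).\<close>

definition force_in :: "'a set \<Rightarrow> ('a \<Rightarrow> 'a \<Rightarrow> bool) \<Rightarrow> 'a set \<Rightarrow> 'a \<Rightarrow> bool" where
  "force_in H E F w \<longleftrightarrow>
     (\<exists>u. u \<in> F \<and> u \<in> H \<and> w \<in> H \<and> w \<notin> F \<and> E u w \<and>
          (\<forall>x\<in>H. E u x \<and> x \<notin> F \<longrightarrow> x = w))"

definition fill_steps :: "'a set \<Rightarrow> ('a \<Rightarrow> 'a \<Rightarrow> bool) \<Rightarrow> 'a set \<Rightarrow> 'a set \<Rightarrow> bool" where
  "fill_steps H E = (\<lambda>F F'. \<exists>w. force_in H E F w \<and> F' = insert w F)\<^sup>*\<^sup>*"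

definition unfilled_components :: "'a set \<Rightarrow> ('a \<Rightarrow> 'a \<Rightarrow> bool) \<Rightarrow> 'a set \<Rightarrow> 'a set set" where
  "unfilled_components V E F =
     {C. \<exists>v\<in>V - F. C = {u. (\<lambda>x y. E x y \<and> x \<in> V - F \<and> y \<in> V - F)\<^sup>*\<^sup>* v u}}"

text \<open>game_win V E qo F t: from filled set F, with t tokens left, the player can
guarantee that all vertices get filled.  qo = None is the Z-Game (operations (1),(2));
qo = Some q is the Z_q-Game (operations (1),(2),(3)).\<close>
inductive game_win :: "'a set \<Rightarrow> ('a \<Rightarrow> 'a \<Rightarrow> bool) \<Rightarrow> nat option \<Rightarrow> 'a set \<Rightarrow> nat \<Rightarrow> bool"
  for V E qo where
  finished: "F = V \<Longrightarrow> game_win V E qo F t"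
| token: "v \<in> V \<Longrightarrow> v \<notin> F \<Longrightarrow> game_win V E qo (insert v F) t \<Longrightarrow> game_win V E qo F (Suc t)"
| force: "force_in V E F w \<Longrightarrow> game_win V E qo (insert w F) t \<Longrightarrow> game_win V E qo F t"
| adversary: "qo = Some q \<Longrightarrow> S \<subseteq> unfilled_components V E F \<Longrightarrow> card S \<ge> q + 1 \<Longrightarrow>
           (\<forall>R. R \<subseteq> S \<and> R \<noteq> {} \<longrightarrow>
               (\<exists>F'. fill_steps (F \<union> \<Union>R) E F F' \<and> game_win V E qo F' t)) \<Longrightarrow>
           game_win V E qo F t"

definition zero_forcing_number :: "'a set \<Rightarrow> ('a \<Rightarrow> 'a \<Rightarrow> bool) \<Rightarrow> nat" where
  "zero_forcing_number V E = (LEAST t. game_win V E None {} t)"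

definition Zq :: "nat \<Rightarrow> 'a set \<Rightarrow> ('a \<Rightarrow> 'a \<Rightarrow> bool) \<Rightarrow> nat" where
  "Zq q V E = (LEAST t. game_win V E (Some q) {} t)"

text \<open>The tree T_k on vertices {0..3k+3}: vertex 0 is the identified leaf; for
i \<le> k, copy i of K_{1,3} has centre 3i+1 and other leaves 3i+2, 3i+3.\<close>
definition star_tree_adj :: "nat \<Rightarrow> nat \<Rightarrow> nat \<Rightarrow> bool" where
  "star_tree_adj k x y \<longleftrightarrow>
     (\<exists>i\<le>k. (x = 0 \<and> y = 3*i+1) \<or> (x = 3*i+1 \<and> y = 0)
          \<or> (x = 3*i+1 \<and> y = 3*i+2) \<or> (x = 3*i+2 \<and> y = 3*i+1)
          \<or> (x = 3*i+1 \<and> y = 3*i+3) \<or> (x = 3*i+3 \<and> y = 3*i+1))"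

end

theory Submission
  imports Defs
begin


lemma adj_sym: "star_tree_adj k x y \<longleftrightarrow> star_tree_adj k y x"
  unfolding star_tree_adj_def by blast

lemma adj_0: "star_tree_adj k 0 x \<longleftrightarrow> (\<exists>i\<le>k. x = 3*i+1)"
  unfolding star_tree_adj_def by auto

lemma ne12: "3*i+1 \<noteq> 3*j+(2::nat)" by presburger
lemma ne13: "3*i+1 \<noteq> 3*j+(3::nat)" by presburger
lemma ne23: "3*i+2 \<noteq> 3*j+(3::nat)" by presburger

lemma adj_c: "i \<le> k \<Longrightarrow> star_tree_adj k (3*i+1) x \<longleftrightarrow> x = 0 \<or> x = 3*i+2 \<or> x = 3*i+3"
  unfolding star_tree_adj_def using ne12 ne13 by auto

lemma adj_a: "star_tree_adj k (3*i+2) x \<longleftrightarrow> i \<le> k \<and> x = 3*i+1"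
  unfolding star_tree_adj_def using ne12 ne23 by (auto; metis ne12 ne23)

lemma adj_b: "star_tree_adj k (3*i+3) x \<longleftrightarrow> i \<le> k \<and> x = 3*i+1"
  unfolding star_tree_adj_def using ne13 ne23 by (auto; metis ne13 ne23)

lemma classify: "(v::nat) < 3*k+4 \<Longrightarrow> v = 0 \<or> (\<exists>i\<le>k. v = 3*i+1 \<or> v = 3*i+2 \<or> v = 3*i+3)"
proof -
  assume v: "v < 3*k+4"
  show ?thesis
  proof (cases "v = 0")
    case False
    define i where "i = (v - 1) div 3"
    have "i \<le> k" using v False unfolding i_def by linarith
    moreover have "v = 3*i+1 \<or> v = 3*i+2 \<or> v = 3*i+3" using False unfolding i_def by presburger
    ultimately show ?thesis by blast
  qed simp
qed

lemma V_decomp: "{..<3*k+4::nat} = insert 0 ((\<lambda>i. 3*i+1) ` {..k} \<union> (\<lambda>i. 3*i+2) ` {..k} \<union> (\<lambda>i. 3*i+3) ` {..k})"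
  (is "?L = ?R")
proof
  show "?L \<subseteq> ?R"
  proof
    fix v assume "v \<in> ?L"
    hence "v < 3*k+4" by simp
    from classify[OF this] show "v \<in> ?R" by blast
  qed
  show "?R \<subseteq> ?L" by auto
qed

definition leaf :: "nat \<Rightarrow> nat \<Rightarrow> bool" where
  "leaf i x \<longleftrightarrow> x = 3*i+2 \<or> x = 3*i+3"

lemma leaf_adj: "leaf i x \<Longrightarrow> star_tree_adj k x z \<longleftrightarrow> i \<le> k \<and> z = 3*i+1"
  unfolding leaf_def using adj_a adj_b by blast

lemma leaf_adj2: "leaf i x \<Longrightarrow> i \<le> k \<Longrightarrow> star_tree_adj k (3*i+1) x"
  unfolding leaf_def using adj_c by blast

lemma leaf_idx: "leaf i x \<Longrightarrow> leaf j x \<Longrightarrow> i = j"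
  unfolding leaf_def by presburger

lemma leaf_ne: "leaf i x \<Longrightarrow> x \<noteq> 0 \<and> x \<noteq> 3*j+1"
  unfolding leaf_def by presburger

lemma leaf_V: "leaf i x \<Longrightarrow> i \<le> k \<Longrightarrow> x < 3*k+4"
  unfolding leaf_def by linarith

lemma leaf_partner:
  assumes "leaf i x" shows "\<exists>y. leaf i y \<and> y \<noteq> x \<and> (\<forall>z. leaf i z \<longrightarrow> z = x \<or> z = y)"
proof (cases "x = 3*i+2")
  case True thus ?thesis by (intro exI[of _ "3*i+3"]) (auto simp: leaf_def)
next
  case False hence "x = 3*i+3" using assms by (simp add: leaf_def)
  thus ?thesis by (intro exI[of _ "3*i+2"]) (auto simp: leaf_def)
qed

lemma leaf_f: "leaf i x \<Longrightarrow> (x - 2) div 3 = i"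
  unfolding leaf_def by (elim disjE) simp_all

definition Res :: "nat \<Rightarrow> nat set \<Rightarrow> nat set" where
  "Res k F = {i. i \<le> k \<and> (\<exists>x. leaf i x \<and> x \<in> F)}"

lemma Res_fin: "finite (Res k F)" unfolding Res_def by auto

lemma Res_mono: "F \<subseteq> G \<Longrightarrow> Res k F \<subseteq> Res k G" unfolding Res_def by auto

lemma Res_insert: "Res k (insert v F) = Res k F \<union> {i. i \<le> k \<and> leaf i v}"
  unfolding Res_def by auto

lemma card_leafset: "card {i. i \<le> k \<and> leaf i v} \<le> 1"
proof -
  have "{i. i \<le> k \<and> leaf i v} \<subseteq> {(v - 2) div 3}" using leaf_f by blast
  from card_mono[OF _ this] show ?thesis by simp
qed

lemma Rc_insert: "card (Res k (insert v F)) \<le> card (Res k F) + 1"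
proof -
  have "card (Res k (insert v F)) \<le> card (Res k F) + card {i. i \<le> k \<and> leaf i v}"
    unfolding Res_insert by (rule card_Un_le)
  thus ?thesis using card_leafset[of k v] by linarith
qed

lemma Res_V: "Res k {..<3*k+4} = {..k}"
proof
  show "Res k {..<3*k+4} \<subseteq> {..k}" unfolding Res_def by blast
  show "{..k} \<subseteq> Res k {..<3*k+4}"
  proof
    fix i assume "i \<in> {..k}"
    hence "i \<le> k" "leaf i (3*i+2)" "3*i+2 \<in> {..<3*k+4}" by (auto simp: leaf_def)
    thus "i \<in> Res k {..<3*k+4}" unfolding Res_def by blast
  qed
qed

lemma Res_empty: "Res k {} = {}" unfolding Res_def by auto

definition comp :: "'a set \<Rightarrow> ('a \<Rightarrow> 'a \<Rightarrow> bool) \<Rightarrow> 'a set \<Rightarrow> 'a \<Rightarrow> 'a set" where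
  "comp V E F v = {u. (\<lambda>x y. E x y \<and> x \<in> V - F \<and> y \<in> V - F)\<^sup>*\<^sup>* v u}"

lemma uc_comp: "C \<in> unfilled_components V E F \<Longrightarrow> \<exists>v\<in>V - F. C = comp V E F v"
  unfolding unfilled_components_def comp_def by auto

lemma comp_uc: "v \<in> V - F \<Longrightarrow> comp V E F v \<in> unfilled_components V E F"
  unfolding unfilled_components_def comp_def by auto

lemma comp_sub: "v \<in> V - F \<Longrightarrow> comp V E F v \<subseteq> V - F"
proof
  fix u assume v: "v \<in> V - F" and "u \<in> comp V E F v"
  hence "(\<lambda>x y. E x y \<and> x \<in> V - F \<and> y \<in> V - F)\<^sup>*\<^sup>* v u" unfolding comp_def by auto
  thus "u \<in> V - F" using v by (induction rule: rtranclp_induct) auto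
qed

lemma uc_sub: "C \<in> unfilled_components V E F \<Longrightarrow> C \<subseteq> V - F"
  using uc_comp comp_sub by metis

lemma comp_closed: "x \<in> comp V E F v \<Longrightarrow> x \<in> V - F \<Longrightarrow> y \<in> V - F \<Longrightarrow> E x y \<Longrightarrow> y \<in> comp V E F v"
  unfolding comp_def by (auto intro: rtranclp.rtrancl_into_rtrancl)

lemma comp_eq:
  assumes sym: "\<And>x y. E x y \<longleftrightarrow> E y x" and x: "x \<in> comp V E F v"
  shows "comp V E F x = comp V E F v"
proof -
  let ?r = "\<lambda>x y. E x y \<and> x \<in> V - F \<and> y \<in> V - F"
  have s: "symp ?r" unfolding symp_def using sym by blast
  have vx: "?r\<^sup>*\<^sup>* v x" using x unfolding comp_def by auto
  hence xv: "?r\<^sup>*\<^sup>* x v" using symp_rtranclp[OF s] by (meson sympD)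
  show ?thesis unfolding comp_def using rtranclp_trans[OF vx] rtranclp_trans[OF xv] by blast
qed

lemma comp_single:
  assumes "\<And>y. E v y \<Longrightarrow> y \<notin> V - F"
  shows "comp V E F v = {v}"
proof -
  have "u = v" if "(\<lambda>x y. E x y \<and> x \<in> V - F \<and> y \<in> V - F)\<^sup>*\<^sup>* v u" for u
    using that by (induction rule: rtranclp_induct) (use assms in auto)
  thus ?thesis unfolding comp_def by auto
qed

lemma fill_sub: "fill_steps H E F F' \<Longrightarrow> F \<subseteq> H \<Longrightarrow> F \<subseteq> F' \<and> F' \<subseteq> H"
  unfolding fill_steps_def
  by (induction rule: rtranclp_induct) (auto simp: force_in_def)

lemma fill_empty: "fill_steps H E {} F' \<Longrightarrow> F' = {}"
  unfolding fill_steps_def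
  by (induction rule: rtranclp_induct) (auto simp: force_in_def)

lemma fill_inv:
  assumes "fill_steps H E F F'" "F \<subseteq> H"
    and step: "\<And>G w. F \<subseteq> G \<Longrightarrow> G \<subseteq> H \<Longrightarrow> Q G \<Longrightarrow> force_in H E G w \<Longrightarrow> Q (insert w G)"
    and "Q F"
  shows "Q F'"
proof -
  have "F \<subseteq> F' \<and> F' \<subseteq> H \<and> Q F'" using assms(1)
    unfolding fill_steps_def
  proof (induction rule: rtranclp_induct)
    case base then show ?case using assms by auto
  next
    case (step y z)
    then obtain w where w: "force_in H E y w" "z = insert w y" by auto
    hence "w \<in> H" unfolding force_in_def by auto
    thus ?case using step w assms(3) by auto
  qed
  thus ?thesis by auto
qed




lemma tokens:
  assumes "finite X"
  shows "X \<subseteq> V \<Longrightarrow> X \<inter> F = {} \<Longrightarrow> game_win V E qo (F \<union> X) t \<Longrightarrow> game_win V E qo F (t + card X)"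
  using assms
proof (induction X arbitrary: F rule: finite_induct)
  case empty then show ?case by simp
next
  case (insert x X)
  have "game_win V E qo (insert x F \<union> X) t" using insert.prems by simp
  hence "game_win V E qo (insert x F) (t + card X)" using insert by auto
  hence "game_win V E qo F (Suc (t + card X))"
    using insert.prems by (intro game_win.token) auto
  thus ?case using insert by simp
qed

lemma force_cs:
  assumes "finite J"
  shows "J \<subseteq> {..k} \<Longrightarrow> (\<forall>i\<le>k. 3*i+2 \<in> F) \<Longrightarrow>
     game_win {..<3*k+4} (star_tree_adj k) qo (F \<union> (\<lambda>i. 3*i+1) ` J) t \<Longrightarrow>
     game_win {..<3*k+4} (star_tree_adj k) qo F t"
  using assms
proof (induction J arbitrary: F rule: finite_induct)
  case empty then show ?case by simp
next
  case (insert j J)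
  have j: "j \<le> k" using insert.prems by auto
  have e: "F \<union> (\<lambda>i. 3*i+1) ` insert j J = insert (3*j+1) F \<union> (\<lambda>i. 3*i+1) ` J" by auto
  have "game_win {..<3*k+4} (star_tree_adj k) qo (insert (3*j+1) F \<union> (\<lambda>i. 3*i+1) ` J) t"
    using insert.prems(3) unfolding e .
  hence g: "game_win {..<3*k+4} (star_tree_adj k) qo (insert (3*j+1) F) t"
    by (rule insert.IH[rotated 2]) (use insert.prems in auto)
  show ?case
  proof (cases "3*j+1 \<in> F")
    case True thus ?thesis using g by (simp add: insert_absorb)
  next
    case False
    have "force_in {..<3*k+4} (star_tree_adj k) F (3*j+1)"
      unfolding force_in_def
    proof (intro exI[of _ "3*j+2"] conjI ballI impI)
      show "3*j+2 \<in> F" using insert.prems j by blast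
      show "3*j+2 \<in> {..<3*k+4}" "3*j+1 \<in> {..<3*k+4}" using j by auto
      show "3*j+1 \<notin> F" by fact
      show "star_tree_adj k (3*j+2) (3*j+1)" using j by (rule adj_a[THEN iffD2, OF conjI]) simp
      fix x assume "star_tree_adj k (3*j+2) x \<and> x \<notin> F"
      thus "x = 3*j+1" using adj_a by blast
    qed
    thus ?thesis using g by (rule game_win.force)
  qed
qed

lemma force_0:
  assumes "j \<le> k" "3*j+1 \<in> F" "3*j+2 \<in> F" "3*j+3 \<in> F"
    and g: "game_win {..<3*k+4} (star_tree_adj k) qo (insert 0 F) t"
  shows "game_win {..<3*k+4} (star_tree_adj k) qo F t"
proof (cases "0 \<in> F")
  case True thus ?thesis using g by (simp add: insert_absorb)
next
  case False
  have "force_in {..<3*k+4} (star_tree_adj k) F 0"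
    unfolding force_in_def
  proof (intro exI[of _ "3*j+1"] conjI ballI impI)
    show "3*j+1 \<in> F" by fact
    show "3*j+1 \<in> {..<3*k+4}" "0 \<in> {..<3*k+4}" using assms(1) by auto
    show "0 \<notin> F" by fact
    show "star_tree_adj k (3*j+1) 0" using adj_c[OF assms(1)] by simp
    fix x assume "star_tree_adj k (3*j+1) x \<and> x \<notin> F"
    thus "x = 0" using adj_c[OF assms(1)] assms by auto
  qed
  thus ?thesis using g by (rule game_win.force)
qed

lemma force_bs:
  assumes "finite J"
  shows "J \<subseteq> {..k} \<Longrightarrow> 0 \<in> F \<Longrightarrow> (\<forall>i\<le>k. 3*i+2 \<in> F \<and> 3*i+1 \<in> F) \<Longrightarrow>
     game_win {..<3*k+4} (star_tree_adj k) qo (F \<union> (\<lambda>i. 3*i+3) ` J) t \<Longrightarrow>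
     game_win {..<3*k+4} (star_tree_adj k) qo F t"
  using assms
proof (induction J arbitrary: F rule: finite_induct)
  case empty then show ?case by simp
next
  case (insert j J)
  have j: "j \<le> k" using insert.prems by auto
  have e: "F \<union> (\<lambda>i. 3*i+3) ` insert j J = insert (3*j+3) F \<union> (\<lambda>i. 3*i+3) ` J" by auto
  have "game_win {..<3*k+4} (star_tree_adj k) qo (insert (3*j+3) F \<union> (\<lambda>i. 3*i+3) ` J) t"
    using insert.prems(4) unfolding e .
  hence g: "game_win {..<3*k+4} (star_tree_adj k) qo (insert (3*j+3) F) t"
    by (rule insert.IH[rotated 3]) (use insert.prems in auto)
  show ?case
  proof (cases "3*j+3 \<in> F")
    case True thus ?thesis using g by (simp add: insert_absorb)
  next
    case False
    have "force_in {..<3*k+4} (star_tree_adj k) F (3*j+3)"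
      unfolding force_in_def
    proof (intro exI[of _ "3*j+1"] conjI ballI impI)
      show "3*j+1 \<in> F" using insert.prems j by blast
      show "3*j+3 \<in> {..<3*k+4}" "3*j+1 \<in> {..<3*k+4}" using j by auto
      show "3*j+3 \<notin> F" by fact
      show "star_tree_adj k (3*j+1) (3*j+3)" using adj_c[OF j] by simp
      fix x assume "star_tree_adj k (3*j+1) x \<and> x \<notin> F"
      thus "x = 3*j+3" using adj_c[OF j] insert.prems j by auto
    qed
    thus ?thesis using g by (rule game_win.force)
  qed
qed

lemma finish_from:
  assumes "F \<subseteq> {..<3*k+4}" "0 \<in> F" "\<forall>i\<le>k. 3*i+2 \<in> F \<and> 3*i+1 \<in> F"
  shows "game_win {..<3*k+4} (star_tree_adj k) qo F t"
proof -
  have "F \<union> (\<lambda>i. 3*i+3) ` {..k} = {..<3*k+4}"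
  proof
    show "F \<union> (\<lambda>i. 3*i+3) ` {..k} \<subseteq> {..<3*k+4}" using assms(1) by auto
    show "{..<3*k+4} \<subseteq> F \<union> (\<lambda>i. 3*i+3) ` {..k}"
      unfolding V_decomp using assms(2,3) by auto
  qed
  hence "game_win {..<3*k+4} (star_tree_adj k) qo (F \<union> (\<lambda>i. 3*i+3) ` {..k}) t"
    by (simp add: game_win.finished)
  thus ?thesis using force_bs[of "{..k}" k F] assms by auto
qed




lemma inj_lin: "inj_on (\<lambda>i::nat. 3*i+c) A" by (auto simp: inj_on_def)

lemma img_V: "c \<le> 3 \<Longrightarrow> (\<lambda>i::nat. 3*i+c) ` {..k} \<subseteq> {..<3*k+4}"
proof
  fix x assume "c \<le> 3" "x \<in> (\<lambda>i::nat. 3*i+c) ` {..k}"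
  then obtain i where "i \<le> k" "x = 3*i+c" by auto
  thus "x \<in> {..<3*k+4}" using \<open>c \<le> 3\<close> by simp
qed

lemma card_img: "card ((\<lambda>i::nat. 3*i+c) ` {..k}) = k+1"
  using card_image[OF inj_lin[of c "{..k}"]] by simp

lemma Z_upper: "game_win {..<3*k+4} (star_tree_adj k) qo {} (k+2)"
proof -
  let ?A = "(\<lambda>i. 3*i+2) ` {..k}" and ?C = "(\<lambda>i. 3*i+1) ` {..k}"
  let ?X = "insert 3 ?A"
  have n3: "3 \<notin> ?A"
  proof
    assume "3 \<in> ?A"
    then obtain x where "3 = 3*x+(2::nat)" by blast
    thus False by presburger
  qed
  have cX: "card ?X = k+2" using card_insert_disjoint[OF finite_imageI[OF finite_atMost] n3] card_img[of 2 k] by simp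
  have AV: "?A \<subseteq> {..<3*k+4}" and CV: "?C \<subseteq> {..<3*k+4}" by (rule img_V; simp)+
  have XV: "?X \<subseteq> {..<3*k+4}" using AV by simp
  have c0: "3*0+1 \<in> ?X \<union> ?C" by (rule UnI2, rule rev_image_eqI[of 0]) auto
  have a0: "3*0+2 \<in> ?X \<union> ?C" by (rule UnI1, rule insertI2, rule rev_image_eqI[of 0]) auto
  have b0: "3*0+3 \<in> ?X \<union> ?C" by simp
  have "game_win {..<3*k+4} (star_tree_adj k) qo (insert 0 (?X \<union> ?C)) 0"
  proof (rule finish_from)
    show "insert 0 (?X \<union> ?C) \<subseteq> {..<3*k+4}" using XV CV by simp
    show "0 \<in> insert 0 (?X \<union> ?C)" by simp
    show "\<forall>i\<le>k. 3*i+2 \<in> insert 0 (?X \<union> ?C) \<and> 3*i+1 \<in> insert 0 (?X \<union> ?C)"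
    proof (intro allI impI conjI)
      fix i assume "i \<le> k"
      have "3*i+2 \<in> ?A" by (rule rev_image_eqI[of i]) (simp_all add: \<open>i \<le> k\<close>)
      moreover have "3*i+1 \<in> ?C" by (rule rev_image_eqI[of i]) (simp_all add: \<open>i \<le> k\<close>)
      ultimately show "3*i+2 \<in> insert 0 (?X \<union> ?C)" "3*i+1 \<in> insert 0 (?X \<union> ?C)" by simp_all
    qed
  qed
  hence g1: "game_win {..<3*k+4} (star_tree_adj k) qo (?X \<union> ?C) 0"
    by (rule force_0[OF _ c0 a0 b0, rotated]) simp
  have allA: "\<forall>i\<le>k. 3*i+2 \<in> ?X"
  proof (intro allI impI)
    fix i assume "i \<le> k"
    have "3*i+2 \<in> ?A" by (rule rev_image_eqI[of i]) (simp_all add: \<open>i \<le> k\<close>)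
    thus "3*i+2 \<in> ?X" by simp
  qed
  have gX: "game_win {..<3*k+4} (star_tree_adj k) qo ?X 0"
    by (rule force_cs[OF finite_atMost order_refl allA g1])
  have fin: "finite ?X" by simp
  have "game_win {..<3*k+4} (star_tree_adj k) qo {} (0 + card ?X)"
    using tokens[OF fin XV, where F="{}" and t=0] gX by simp
  thus ?thesis using cX by simp
qed
lemma Zq_upper: "game_win {..<3*k+4} (star_tree_adj k) (Some k) {} (k+1)"
proof -
  let ?V = "{..<3*k+4}" and ?E = "star_tree_adj k"
  let ?A = "(\<lambda>i. 3*i+2) ` {..k}" and ?C = "(\<lambda>i. 3*i+1) ` {..k}"
  let ?F = "?A \<union> ?C"
  let ?S = "(\<lambda>i. {3*i+3}) ` {..k}"
  have bF: "3*i+3 \<notin> ?F" for i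
  proof
    assume "3*i+3 \<in> ?F"
    then obtain x where "3*i+3 = 3*x+2 \<or> 3*i+3 = 3*x+1" by blast
    thus False by presburger
  qed
  have 0: "0 \<notin> ?F" by auto
  have inF: "3*i+2 \<in> ?F \<and> 3*i+1 \<in> ?F" if "i \<le> k" for i
  proof
    show "3*i+2 \<in> ?F" by (rule UnI1, rule rev_image_eqI[of i]) (simp_all add: that)
    show "3*i+1 \<in> ?F" by (rule UnI2, rule rev_image_eqI[of i]) (simp_all add: that)
  qed
  have AV: "?A \<subseteq> ?V" and CV: "?C \<subseteq> ?V" by (rule img_V; simp)+
  have S_uc: "?S \<subseteq> unfilled_components ?V ?E ?F"
  proof
    fix C assume "C \<in> ?S"
    then obtain i where i: "i \<le> k" "C = {3*i+3}" by auto
    have nb: "y \<notin> ?V - ?F" if "?E (3*i+3) y" for y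
    proof -
      have "y = 3*i+1" using that adj_b by blast
      thus ?thesis using inF[OF i(1)] by blast
    qed
    have "comp ?V ?E ?F (3*i+3) = {3*i+3}" by (rule comp_single) (rule nb)
    moreover have "comp ?V ?E ?F (3*i+3) \<in> unfilled_components ?V ?E ?F"
    proof (rule comp_uc)
      show "3*i+3 \<in> ?V - ?F" using bF[of i] i(1) by simp
    qed
    ultimately show "C \<in> unfilled_components ?V ?E ?F" using i by simp
  qed
  have cS: "card ?S = k+1" by (subst card_image) (auto simp: inj_on_def)
  have win: "game_win ?V ?E (Some k) ?F 0"
  proof (rule game_win.adversary[OF refl S_uc])
    show "k + 1 \<le> card ?S" using cS by simp
    show "\<forall>R. R \<subseteq> ?S \<and> R \<noteq> {} \<longrightarrow> (\<exists>F'. fill_steps (?F \<union> \<Union>R) ?E ?F F' \<and> game_win ?V ?E (Some k) F' 0)"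
    proof (intro allI impI)
      fix R assume R: "R \<subseteq> ?S \<and> R \<noteq> {}"
      then obtain j where j: "j \<le> k" "{3*j+3} \<in> R" by blast
      let ?H = "?F \<union> \<Union>R"
      have H0: "0 \<notin> ?H"
      proof
        assume "0 \<in> ?H"
        then obtain D where "D \<in> R" "0 \<in> D" using 0 by blast
        then obtain i where "D = {3*i+3}" using R by blast
        thus False using \<open>0 \<in> D\<close> by simp
      qed
      have fi: "force_in ?H ?E ?F (3*j+3)"
        unfolding force_in_def
      proof (intro exI[of _ "3*j+1"] conjI ballI impI)
        show "3*j+1 \<in> ?F" using inF[OF j(1)] by blast
        thus "3*j+1 \<in> ?H" by blast
        show "3*j+3 \<in> ?H" using j by blast
        show "3*j+3 \<notin> ?F" by (rule bF)
        show "?E (3*j+1) (3*j+3)" using adj_c[OF j(1)] by simp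
        fix x assume x: "x \<in> ?H" "?E (3*j+1) x \<and> x \<notin> ?F"
        hence "x = 0 \<or> x = 3*j+2 \<or> x = 3*j+3" using adj_c[OF j(1)] by blast
        thus "x = 3*j+3" using x H0 inF[OF j(1)] by blast
      qed
      have fs: "fill_steps ?H ?E ?F (insert (3*j+3) ?F)"
        unfolding fill_steps_def using fi by (intro r_into_rtranclp) blast
      have sub: "insert 0 (insert (3*j+3) ?F) \<subseteq> ?V" using AV CV j(1) by auto
      have g0: "game_win ?V ?E (Some k) (insert 0 (insert (3*j+3) ?F)) 0"
      proof (rule finish_from[OF sub])
        show "0 \<in> insert 0 (insert (3*j+3) ?F)" by simp
        show "\<forall>i\<le>k. 3*i+2 \<in> insert 0 (insert (3*j+3) ?F) \<and> 3*i+1 \<in> insert 0 (insert (3*j+3) ?F)"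
          using inF by blast
      qed
      have m: "3*j+1 \<in> insert (3*j+3) ?F" "3*j+2 \<in> insert (3*j+3) ?F" "3*j+3 \<in> insert (3*j+3) ?F"
        using inF[OF j(1)] by blast+
      have "game_win ?V ?E (Some k) (insert (3*j+3) ?F) 0"
        by (rule force_0[OF j(1) m g0])
      thus "\<exists>F'. fill_steps ?H ?E ?F F' \<and> game_win ?V ?E (Some k) F' 0"
        using fs by blast
    qed
  qed
  have allA: "\<forall>i\<le>k. 3*i+2 \<in> ?A"
  proof (intro allI impI)
    fix i assume "i \<le> k"
    show "3*i+2 \<in> ?A" by (rule rev_image_eqI[of i]) (simp_all add: \<open>i \<le> k\<close>)
  qed
  have gA: "game_win ?V ?E (Some k) ?A 0"
    by (rule force_cs[OF finite_atMost order_refl allA win])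
  have fin: "finite ?A" by simp
  have "game_win ?V ?E (Some k) {} (0 + card ?A)"
    using tokens[OF fin AV, where F="{}" and t=0] gA by simp
  thus ?thesis using card_img[of 2 k] by simp
qed




lemma leaf_three: "leaf i x \<Longrightarrow> leaf i y \<Longrightarrow> x \<noteq> y \<Longrightarrow> leaf i z \<Longrightarrow> z = x \<or> z = y"
  unfolding leaf_def by auto

lemma force_u:
  assumes "force_in H (star_tree_adj k) G x" "leaf i x"
  shows "i \<le> k \<and> 3*i+1 \<in> G \<and> x \<in> H \<and> x \<notin> G \<and>
    (\<forall>z\<in>H. star_tree_adj k (3*i+1) z \<and> z \<notin> G \<longrightarrow> z = x)"
proof -
  obtain u where u: "u \<in> G" "u \<in> H" "x \<in> H" "x \<notin> G" "star_tree_adj k u x"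
    "\<forall>z\<in>H. star_tree_adj k u z \<and> z \<notin> G \<longrightarrow> z = x"
    using assms(1) unfolding force_in_def by blast
  have "star_tree_adj k x u" using u(5) adj_sym by blast
  hence "i \<le> k \<and> u = 3*i+1" using leaf_adj[OF assms(2)] by blast
  thus ?thesis using u by blast
qed

lemma force_partner:
  assumes "force_in H (star_tree_adj k) G x" "leaf i x" "leaf i y" "y \<noteq> x" "y \<in> H"
  shows "y \<in> G"
proof (rule ccontr)
  assume "y \<notin> G"
  have f: "i \<le> k \<and> 3*i+1 \<in> G \<and> x \<in> H \<and> x \<notin> G \<and>
    (\<forall>z\<in>H. star_tree_adj k (3*i+1) z \<and> z \<notin> G \<longrightarrow> z = x)" by (rule force_u[OF assms(1,2)])
  have "star_tree_adj k (3*i+1) y" using leaf_adj2[OF assms(3)] f by blast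
  thus False using f \<open>y \<notin> G\<close> assms(4,5) by blast
qed

lemma force_leaf0:
  assumes "force_in H (star_tree_adj k) G x" "leaf i x" "0 \<in> H"
  shows "0 \<in> G"
proof (rule ccontr)
  assume "0 \<notin> G"
  have f: "i \<le> k \<and> 3*i+1 \<in> G \<and> x \<in> H \<and> x \<notin> G \<and>
    (\<forall>z\<in>H. star_tree_adj k (3*i+1) z \<and> z \<notin> G \<longrightarrow> z = x)" by (rule force_u[OF assms(1,2)])
  have "star_tree_adj k (3*i+1) 0" using adj_c f by blast
  moreover have "x \<noteq> 0" using leaf_ne[OF assms(2)] by blast
  ultimately show False using f \<open>0 \<notin> G\<close> assms(3) by blast
qed

lemma force_V_res:
  assumes "force_in {..<3*k+4} (star_tree_adj k) F w"
  shows "Res k (insert w F) = Res k F"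
proof -
  have "{i. i \<le> k \<and> leaf i w} \<subseteq> Res k F"
  proof
    fix i assume i: "i \<in> {i. i \<le> k \<and> leaf i w}"
    then obtain y where y: "leaf i y" "y \<noteq> w" using leaf_partner by blast
    have "y \<in> {..<3*k+4}" using leaf_V[OF y(1)] i by simp
    hence "y \<in> F" using force_partner[OF assms _ y(1) y(2)] i by blast
    thus "i \<in> Res k F" unfolding Res_def using i y by blast
  qed
  thus ?thesis unfolding Res_insert by blast
qed

definition NB :: "nat set \<Rightarrow> bool" where
  "NB F \<longleftrightarrow> (\<forall>i x y. leaf i x \<longrightarrow> leaf i y \<longrightarrow> x \<in> F \<longrightarrow> y \<in> F \<longrightarrow> x = y)"

lemma lowerN:
  assumes "game_win {..<3*k+4} (star_tree_adj k) qo F t"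
  shows "qo = None \<Longrightarrow> t + card (Res k F) \<le> k+1 \<Longrightarrow>
     (t + card (Res k F) = k+1 \<longrightarrow> 0 \<notin> F \<and> NB F) \<Longrightarrow> False"
  using assms
proof (induction rule: game_win.induct)
  case (finished F t)
  hence "card (Res k F) = k+1" using Res_V by simp
  thus False using finished by simp
next
  case (token v F t)
  let ?c = "card (Res k F)" and ?c' = "card (Res k (insert v F))"
  have le: "?c' \<le> ?c + 1" by (rule Rc_insert)
  have mono: "?c \<le> ?c'" by (rule card_mono[OF Res_fin Res_mono]) blast
  show False
  proof (rule token.IH)
    show "qo = None" by fact
    show "t + ?c' \<le> k+1" using le token.prems(2) by linarith
    show "t + ?c' = k+1 \<longrightarrow> 0 \<notin> insert v F \<and> NB (insert v F)"
    proof
      assume tight: "t + ?c' = k+1"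
      hence eq: "?c' = ?c + 1" "Suc t + ?c = k+1" using le mono token.prems(2) by linarith+
      hence pre: "0 \<notin> F" "NB F" using token.prems(3) by auto
      have "Res k (insert v F) \<noteq> Res k F" using eq(1) by auto
      then obtain i where i: "i \<le> k" "leaf i v" "i \<notin> Res k F" unfolding Res_insert by blast
      have "v \<noteq> 0" using leaf_ne[OF i(2)] by blast
      moreover have "NB (insert v F)"
        unfolding NB_def
      proof (intro allI impI)
        fix j x y assume h: "leaf j x" "leaf j y" "x \<in> insert v F" "y \<in> insert v F"
        show "x = y"
        proof (cases "x = v \<or> y = v")
          case False thus ?thesis using h pre(2) unfolding NB_def by blast
        next
          case True
          show ?thesis
          proof (rule ccontr)
            assume ne: "x \<noteq> y"
            have "j = i" using True h leaf_idx i(2) by blast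
            hence "i \<in> Res k F" unfolding Res_def using True h ne i(1) by blast
            thus False using i(3) by blast
          qed
        qed
      qed
      ultimately show "0 \<notin> insert v F \<and> NB (insert v F)" using pre by blast
    qed
  qed
next
  case (force F w t)
  have R: "Res k (insert w F) = Res k F" by (rule force_V_res[OF force.hyps(1)])
  show False
  proof (rule force.IH)
    show "qo = None" by fact
    show "t + card (Res k (insert w F)) \<le> k+1" using R force.prems by simp
    show "t + card (Res k (insert w F)) = k+1 \<longrightarrow> 0 \<notin> insert w F \<and> NB (insert w F)"
    proof
      assume "t + card (Res k (insert w F)) = k+1"
      hence pre: "0 \<notin> F" "NB F" using R force.prems(3) by auto
      have nl: "\<not> leaf i w" for i
      proof
        assume "leaf i w"
        hence "0 \<in> F" using force_leaf0[OF force.hyps(1)] by simp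
        thus False using pre by blast
      qed
      have "w \<noteq> 0"
      proof
        assume w0: "w = 0"
        obtain u where u: "u \<in> F" "star_tree_adj k u 0"
          "\<forall>z\<in>{..<3*k+4}. star_tree_adj k u z \<and> z \<notin> F \<longrightarrow> z = 0"
          using force.hyps(1) w0 unfolding force_in_def by blast
        have "star_tree_adj k 0 u" using u(2) adj_sym by blast
        then obtain j where j: "j \<le> k" "u = 3*j+1" using adj_0[THEN iffD1] by blast
        have e2: "star_tree_adj k u (3*j+2)" unfolding j(2) by (rule adj_c[OF j(1), THEN iffD2]) simp
        have e3: "star_tree_adj k u (3*j+3)" unfolding j(2) by (rule adj_c[OF j(1), THEN iffD2]) simp
        have v2: "3*j+2 \<in> {..<3*k+4}" and v3: "3*j+3 \<in> {..<3*k+4}" using j(1) by simp_all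
        have a: "3*j+2 \<in> F"
        proof (rule ccontr)
          assume "3*j+2 \<notin> F" hence "3*j+2 = 0" using u(3) e2 v2 by blast
          thus False by simp
        qed
        have b: "3*j+3 \<in> F"
        proof (rule ccontr)
          assume "3*j+3 \<notin> F" hence "3*j+3 = 0" using u(3) e3 v3 by blast
          thus False by simp
        qed
        have "3*j+2 = 3*j+(3::nat)" using pre(2) a b unfolding NB_def leaf_def by blast
        thus False by simp
      qed
      moreover have "NB (insert w F)" using pre(2) nl unfolding NB_def by blast
      ultimately show "0 \<notin> insert w F \<and> NB (insert w F)" using pre by blast
    qed
  qed
next
  case (adversary q S F t)
  thus False by simp
qed




lemma adv_choice:
  assumes FV: "F \<subseteq> {..<3*k+4}"
    and S: "S \<subseteq> unfilled_components {..<3*k+4} (star_tree_adj k) F"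
    and cS: "k + 1 \<le> card S" and tk: "t < k" and bnd: "t + card (Res k F) \<le> k"
  shows "\<exists>R. R \<subseteq> S \<and> R \<noteq> {} \<and>
    (\<forall>F'. fill_steps (F \<union> \<Union>R) (star_tree_adj k) F F' \<longrightarrow>
        F' \<subseteq> {..<3*k+4} \<and> t + card (Res k F') \<le> k)"
proof -
  let ?V = "{..<3*k+4}" and ?E = "star_tree_adj k"
  define Bad where "Bad = {C. \<exists>i\<le>k. \<exists>x y. leaf i x \<and> leaf i y \<and> x \<noteq> y \<and> C = {x} \<and> y \<notin> F \<and> {y} \<notin> S}"
  have Ssub: "\<And>C. C \<in> S \<Longrightarrow> C \<subseteq> ?V - F" using S uc_sub by blast
  have symE: "\<And>x y. ?E x y \<longleftrightarrow> ?E y x" using adj_sym by blast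
  show ?thesis
  proof (cases "S - Bad = {}")
    case False
    let ?R = "S - Bad"
    let ?H = "F \<union> \<Union>?R"
    have HV: "?H \<subseteq> ?V" using FV Ssub by blast
    have step: "G \<subseteq> ?V \<and> Res k G = Res k F \<Longrightarrow> force_in ?H ?E G w \<Longrightarrow> F \<subseteq> G \<Longrightarrow> G \<subseteq> ?H
        \<Longrightarrow> insert w G \<subseteq> ?V \<and> Res k (insert w G) = Res k F" for G w
    proof -
      assume QG: "G \<subseteq> ?V \<and> Res k G = Res k F" and fi: "force_in ?H ?E G w"
        and FG: "F \<subseteq> G" and GH: "G \<subseteq> ?H"
      have wH: "w \<in> ?H" and wG: "w \<notin> G" using fi unfolding force_in_def by blast+
      have "{i. i \<le> k \<and> leaf i w} \<subseteq> Res k G"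
      proof
        fix i assume "i \<in> {i. i \<le> k \<and> leaf i w}"
        hence i: "i \<le> k" "leaf i w" by auto
        obtain y where y: "leaf i y" "y \<noteq> w" "\<forall>z. leaf i z \<longrightarrow> z = w \<or> z = y"
          using leaf_partner[OF i(2)] by blast
        show "i \<in> Res k G"
        proof (rule ccontr)
          assume nR: "i \<notin> Res k G"
          hence yG: "y \<notin> G" unfolding Res_def using i y by blast
          have yH: "y \<notin> ?H" using force_partner[OF fi i(2) y(1) y(2)] yG by blast
          have yV: "y \<in> ?V" using leaf_V[OF y(1) i(1)] by simp
          have yF: "y \<notin> F" using yG FG by blast
          obtain C where C: "C \<in> ?R" "w \<in> C" using wH wG FG by blast
          have CS: "C \<in> S" using C by blast
          obtain v where v: "v \<in> ?V - F" "C = comp ?V ?E F v"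
            using uc_comp S CS by blast
          have wVF: "w \<in> ?V - F" using Ssub[OF CS] C(2) by blast
          show False
          proof (cases "3*i+1 \<in> F")
            case True
            have "comp ?V ?E F w = {w}"
            proof (rule comp_single)
              fix z assume "?E w z"
              hence "z = 3*i+1" using leaf_adj[OF i(2)] by blast
              thus "z \<notin> ?V - F" using True by blast
            qed
            moreover have "comp ?V ?E F w = comp ?V ?E F v"
              by (rule comp_eq[OF symE]) (use C v in blast)
            ultimately have Cw: "C = {w}" using v by simp
            have ySin: "{y} \<in> S"
            proof (rule ccontr)
              assume "{y} \<notin> S"
              hence "C \<in> Bad" unfolding Bad_def using i y yF Cw by blast
              thus False using C by blast
            qed
            have "{y} \<notin> Bad"
            proof
              assume "{y} \<in> Bad"
              then obtain i' x' y' where b: "i' \<le> k" "leaf i' x'" "leaf i' y'" "x' \<noteq> y'" "{y} = {x'}"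
                "{y'} \<notin> S" unfolding Bad_def by blast
              have "x' = y" using b(5) by simp
              hence "i' = i" using b(2) y(1) leaf_idx by blast
              hence "y' = w" using y(3) b(3) b(4) \<open>x' = y\<close> by blast
              thus False using b(6) Cw CS by simp
            qed
            hence "{y} \<in> ?R" using ySin by blast
            hence "y \<in> ?H" by blast
            thus False using yH by blast
          next
            case False
            have cV: "3*i+1 \<in> ?V - F" using False i(1) by simp
            have wc: "w \<in> comp ?V ?E F v" using C v by blast
            have "?E w (3*i+1)" using leaf_adj[OF i(2)] i(1) by blast
            hence cC: "3*i+1 \<in> comp ?V ?E F v" by (rule comp_closed[OF wc wVF cV])
            have "?E (3*i+1) y" by (rule leaf_adj2[OF y(1) i(1)])
            moreover have yVF: "y \<in> ?V - F" using yV yF by blast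
            ultimately have "y \<in> comp ?V ?E F v" using comp_closed[OF cC cV yVF] by blast
            hence "y \<in> ?H" using v C by blast
            thus False using yH by blast
          qed
        qed
      qed
      hence "Res k (insert w G) = Res k G" unfolding Res_insert by blast
      moreover have "w \<in> ?V" using wH HV by blast
      ultimately show ?thesis using QG by simp
    qed
    show ?thesis
    proof (intro exI[of _ ?R] conjI allI impI)
      show "?R \<subseteq> S" by blast
      show "?R \<noteq> {}" by fact
      fix F' assume fs: "fill_steps ?H ?E F F'"
      have "F' \<subseteq> ?V \<and> Res k F' = Res k F"
        by (rule fill_inv[OF fs, where Q="\<lambda>G. G \<subseteq> ?V \<and> Res k G = Res k F"])
           (use step FV in blast)+
      thus "F' \<subseteq> ?V" "t + card (Res k F') \<le> k" using bnd by simp_all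
    qed
  next
    case True
    hence SB: "S \<subseteq> Bad" by blast
    have Sne: "S \<noteq> {}" using cS by auto
    have finS: "finite S" using cS card.infinite by fastforce
    have Res0: "Res k F = {}"
    proof (rule ccontr)
      assume "Res k F \<noteq> {}"
      then obtain j where j: "j \<in> Res k F" by blast
      then obtain zj where zj: "leaf j zj" "zj \<in> F" "j \<le> k" unfolding Res_def by blast
      define f where "f C = (Min C - 2) div 3" for C :: "nat set"
      have fC: "\<exists>i x y. i \<le> k \<and> leaf i x \<and> leaf i y \<and> x \<noteq> y \<and> C = {x} \<and> y \<notin> F \<and> {y} \<notin> S \<and> f C = i"
        if CS: "C \<in> S" for C
      proof -
        obtain i x y where b: "i \<le> k" "leaf i x" "leaf i y" "x \<noteq> y" "C = {x}" "y \<notin> F" "{y} \<notin> S"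
          using SB CS unfolding Bad_def by blast
        have "f C = i" unfolding f_def b(5) using leaf_f[OF b(2)] by simp
        thus ?thesis using b by blast
      qed
      have inj: "inj_on f S"
      proof (rule inj_onI)
        fix C D assume CD: "C \<in> S" "D \<in> S" "f C = f D"
        obtain i x y where c: "i \<le> k" "leaf i x" "leaf i y" "x \<noteq> y" "C = {x}" "y \<notin> F" "{y} \<notin> S" "f C = i"
          using fC[OF CD(1)] by blast
        obtain i' x' y' where d: "i' \<le> k" "leaf i' x'" "D = {x'}" "f D = i'"
          using fC[OF CD(2)] by blast
        have "i' = i" using c(8) d(4) CD(3) by simp
        hence "x' = x \<or> x' = y" using leaf_three[OF c(2) c(3) c(4)] d(2) by blast
        thus "C = D" using c d CD(2) by blast
      qed
      have img: "f ` S \<subseteq> {..k} - {j}"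
      proof
        fix n assume "n \<in> f ` S"
        then obtain C where C: "C \<in> S" "n = f C" by blast
        obtain i x y where c: "i \<le> k" "leaf i x" "leaf i y" "x \<noteq> y" "C = {x}" "y \<notin> F" "f C = i"
          using fC[OF C(1)] by blast
        have xF: "x \<notin> F" using Ssub[OF C(1)] c(5) by blast
        have "i \<noteq> j"
        proof
          assume "i = j"
          hence "zj = x \<or> zj = y" using leaf_three[OF c(2) c(3) c(4)] zj(1) by blast
          thus False using xF c(6) zj(2) by blast
        qed
        thus "n \<in> {..k} - {j}" using c C by simp
      qed
      have "card S \<le> card ({..k} - {j})" by (rule card_inj_on_le[OF inj img]) simp
      also have "\<dots> = k" using zj(3) by simp
      finally show False using cS by simp
    qed
    obtain C where C: "C \<in> S" using Sne by blast
    obtain i x y where b: "i \<le> k" "leaf i x" "C = {x}"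
      using SB C unfolding Bad_def by blast
    show ?thesis
    proof (intro exI[of _ "{C}"] conjI allI impI)
      show "{C} \<subseteq> S" using C by blast
      show "{C} \<noteq> {}" by blast
      fix F' assume fs: "fill_steps (F \<union> \<Union>{C}) ?E F F'"
      have "F \<subseteq> F' \<and> F' \<subseteq> F \<union> \<Union>{C}" by (rule fill_sub[OF fs]) blast
      hence F'sub: "F' \<subseteq> insert x F" using b by blast
      show "F' \<subseteq> ?V" using F'sub FV leaf_V[OF b(2) b(1)] by blast
      have "Res k F' \<subseteq> Res k (insert x F)" by (rule Res_mono[OF F'sub])
      also have "\<dots> = {i. i \<le> k \<and> leaf i x}" unfolding Res_insert Res0 by simp
      finally have "card (Res k F') \<le> card {i. i \<le> k \<and> leaf i x}"
        by (rule card_mono[rotated]) simp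
      thus "t + card (Res k F') \<le> k" using card_leafset[of k x] tk by linarith
    qed
  qed
qed

lemma lowerS:
  assumes "game_win {..<3*k+4} (star_tree_adj k) qo F t"
  shows "qo = Some k \<Longrightarrow> F \<subseteq> {..<3*k+4} \<Longrightarrow> t + card (Res k F) \<le> k \<Longrightarrow>
     (t = k \<longrightarrow> F = {}) \<Longrightarrow> False"
  using assms
proof (induction rule: game_win.induct)
  case (finished F t)
  hence "card (Res k F) = k+1" using Res_V by simp
  thus False using finished by simp
next
  case (token v F t)
  have le: "card (Res k (insert v F)) \<le> card (Res k F) + 1" by (rule Rc_insert)
  show False
  proof (rule token.IH)
    show "qo = Some k" by fact
    show "insert v F \<subseteq> {..<3*k+4}" using token by blast
    show "t + card (Res k (insert v F)) \<le> k" using le token.prems(3) by linarith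
    show "t = k \<longrightarrow> insert v F = {}" using token.prems(3) by simp
  qed
next
  case (force F w t)
  have R: "Res k (insert w F) = Res k F" by (rule force_V_res[OF force.hyps(1)])
  have wV: "w \<in> {..<3*k+4}" and Fne: "F \<noteq> {}" using force.hyps(1) unfolding force_in_def by blast+
  show False
  proof (rule force.IH)
    show "qo = Some k" by fact
    show "insert w F \<subseteq> {..<3*k+4}" using force.prems(2) wV by blast
    show "t + card (Res k (insert w F)) \<le> k" using R force.prems by simp
    show "t = k \<longrightarrow> insert w F = {}" using force.prems(4) Fne by blast
  qed
next
  case (adversary q S F t)
  have q: "q = k" using adversary by simp
  show False
  proof (cases "t = k")
    case True
    hence F0: "F = {}" using adversary.prems by blast
    have "S \<noteq> {}" using adversary.hyps(3) by auto
    then obtain F' where F': "fill_steps (F \<union> \<Union>S) (star_tree_adj k) F F'"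
      "qo = Some k \<Longrightarrow> F' \<subseteq> {..<3*k+4} \<Longrightarrow> t + card (Res k F') \<le> k \<Longrightarrow> (t = k \<longrightarrow> F' = {}) \<Longrightarrow> False"
      using adversary.IH by blast
    have "F' = {}" using fill_empty F'(1) F0 by blast
    thus False using F'(2) adversary.prems True Res_empty by simp
  next
    case False
    hence tk: "t < k" using adversary.prems(3) by simp
    obtain R where R: "R \<subseteq> S" "R \<noteq> {}"
      "\<forall>F'. fill_steps (F \<union> \<Union>R) (star_tree_adj k) F F' \<longrightarrow>
        F' \<subseteq> {..<3*k+4} \<and> t + card (Res k F') \<le> k"
      using adv_choice[OF adversary.prems(2) adversary.hyps(2) _ tk adversary.prems(3)] adversary.hyps(3) q
      by blast
    then obtain F' where F': "fill_steps (F \<union> \<Union>R) (star_tree_adj k) F F'"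
      "qo = Some k \<Longrightarrow> F' \<subseteq> {..<3*k+4} \<Longrightarrow> t + card (Res k F') \<le> k \<Longrightarrow> (t = k \<longrightarrow> F' = {}) \<Longrightarrow> False"
      using adversary.IH by blast
    thus False using R(3) adversary.prems(1) tk by blast
  qed
qed

theorem proposition2p4:
  fixes k :: nat
  shows "zero_forcing_number {..<3*k+4} (star_tree_adj k) = k + 2 \<and>
         Zq k {..<3*k+4} (star_tree_adj k) = k + 1"
proof
  show "zero_forcing_number {..<3*k+4} (star_tree_adj k) = k + 2"
    unfolding zero_forcing_number_def
  proof (rule Least_equality)
    show "game_win {..<3*k+4} (star_tree_adj k) None {} (k+2)" by (rule Z_upper)
    fix y assume g: "game_win {..<3*k+4} (star_tree_adj k) None {} y"
    show "k + 2 \<le> y"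
    proof (rule ccontr)
      assume "\<not> k + 2 \<le> y"
      hence "y + card (Res k {}) \<le> k+1" by (simp add: Res_empty)
      moreover have "y + card (Res k {}) = k+1 \<longrightarrow> 0 \<notin> {} \<and> NB {}" by (simp add: NB_def)
      ultimately show False using lowerN[OF g] by blast
    qed
  qed
  show "Zq k {..<3*k+4} (star_tree_adj k) = k + 1"
    unfolding Zq_def
  proof (rule Least_equality)
    show "game_win {..<3*k+4} (star_tree_adj k) (Some k) {} (k+1)" by (rule Zq_upper)
    fix y assume g: "game_win {..<3*k+4} (star_tree_adj k) (Some k) {} y"
    show "k + 1 \<le> y"
    proof (rule ccontr)
      assume "\<not> k + 1 \<le> y"
      hence "y + card (Res k {}) \<le> k" by (simp add: Res_empty)
      thus False using lowerS[OF g] by blast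
    qed
  qed
qed


end
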